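(* Let $\alpha\in(\pi/8,3\pi/8)$ with $\alpha/\pi\notin\mathbb{Q}$, $\beta=\alpha-\pi/2$, $\rho=0.01$, $A_1=\rho R(\alpha)$, $A_2=\rho R(\beta)$ where $R(\theta)=\begin{bmatrix}\cos\theta&-\sin\theta\\ \sin\theta&\cos\theta\end{bmatrix}$, and $c(x)=x_1^2+2x_2^2$ on $\mathbb{R}^2$. Let $J^\star$ be the optimal value function of $\{A_1,A_2\}$ with cost $c$, $\tilde J^\star(\theta)=J^\star([\cos\theta,\sin\theta]^\top)$, $\Delta\tilde J^\star(\theta)=\tilde J^\star(\theta+\alpha)-\tilde J^\star(\theta+\beta)$, $\mu=\pi/4-\alpha$, $\delta=0.01$. Let $\nu\in(\mu-\delta,\mu+\delta)$ satisfy $\Delta\tilde J^\star(\nu)=0$. Then $\tilde J^\star$ is not differentiable at $\nu$.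
   Context: For the switched linear system $\xi(t+1)=A_{\sigma(t)}\xi(t)$ with switching signal $\sigma:\mathbb{N}\to\{1,2\}$, $\xi(t,x,\sigma)$ denotes the solution with $\xi(0)=x$, and $J^\star(x)=\inf_\sigma\sum_{t=0}^\infty c(\xi(t,x,\sigma))$. (Such a $\nu$ exists and is unique in $(\mu-\delta,\mu+\delta)$.) *)

theory Defs
  imports "HOL-Analysis.Analysis"
begin

definition rot :: "real \<Rightarrow> real^2^2" where
  "rot \<theta> = vector [vector [cos \<theta>, - sin \<theta>], vector [sin \<theta>, cos \<theta>]]"

fun sw_traj :: "(nat \<Rightarrow> real^2^2) \<Rightarrow> real^2 \<Rightarrow> (nat \<Rightarrow> nat) \<Rightarrow> nat \<Rightarrow> real^2" where
  "sw_traj A x \<sigma> 0 = x"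
| "sw_traj A x \<sigma> (Suc t) = A (\<sigma> t) *v sw_traj A x \<sigma> t"

definition switching_signals :: "(nat \<Rightarrow> nat) set" where
  "switching_signals = {\<sigma>. \<forall>t. \<sigma> t \<in> {1, 2}}"

definition opt_value :: "(nat \<Rightarrow> real^2^2) \<Rightarrow> (real^2 \<Rightarrow> real) \<Rightarrow> real^2 \<Rightarrow> real" where
  "opt_value A c x = (INF \<sigma>\<in>switching_signals. (\<Sum>t. c (sw_traj A x \<sigma> t)))"

end

theory Submission
  imports Defs
begin

definition ang :: "real \<Rightarrow> nat \<Rightarrow> real" where "ang a i = (if i = 1 then a else a - pi/2)"
definition ssum :: "real \<Rightarrow> (nat \<Rightarrow> nat) \<Rightarrow> nat \<Rightarrow> real" where "ssum a \<sigma> t = (\<Sum>i<t. ang a (\<sigma> i))"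
definition rr :: real where "rr = 0.0001"
definition G :: "real \<Rightarrow> (nat \<Rightarrow> nat) \<Rightarrow> real \<Rightarrow> real" where
  "G a \<sigma> \<theta> = (\<Sum>t. rr^t * (1 + (sin (\<theta> + ssum a \<sigma> t))\<^sup>2))"
definition Jf :: "real \<Rightarrow> real \<Rightarrow> real" where "Jf a \<theta> = (INF \<sigma>\<in>switching_signals. G a \<sigma> \<theta>)"

lemma rot_vec: "rot a *v vector [cos p, sin p] = vector [cos (p + a), sin (p + a)]"
  by (simp add: rot_def vec_eq_iff forall_2 matrix_vector_mult_def sum_2 cos_add sin_add algebra_simps)

lemma traj: "sw_traj (\<lambda>i. if i = 1 then 0.01 *\<^sub>R rot a else 0.01 *\<^sub>R rot (a - pi / 2)) (vector [cos \<theta>, sin \<theta>]) \<sigma> t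
  = ((0.01::real)^t) *\<^sub>R vector [cos (\<theta> + ssum a \<sigma> t), sin (\<theta> + ssum a \<sigma> t)]"
proof (induction t)
  case 0 show ?case by (simp add: ssum_def)
next
  case (Suc t)
  have e: "(if \<sigma> t = 1 then 0.01 *\<^sub>R rot a else 0.01 *\<^sub>R rot (a - pi / 2)) = (0.01::real) *\<^sub>R rot (ang a (\<sigma> t))"
    by (simp add: ang_def)
  have "sw_traj (\<lambda>i. if i = 1 then 0.01 *\<^sub>R rot a else 0.01 *\<^sub>R rot (a - pi / 2)) (vector [cos \<theta>, sin \<theta>]) \<sigma> (Suc t)
    = ((0.01::real) *\<^sub>R rot (ang a (\<sigma> t))) *v (((0.01::real)^t) *\<^sub>R vector [cos (\<theta> + ssum a \<sigma> t), sin (\<theta> + ssum a \<sigma> t)])"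
    using Suc e by simp
  also have "\<dots> = ((0.01::real)^Suc t) *\<^sub>R (rot (ang a (\<sigma> t)) *v vector [cos (\<theta> + ssum a \<sigma> t), sin (\<theta> + ssum a \<sigma> t)])"
    by (simp add: scaleR_matrix_vector_assoc[symmetric] matrix_vector_mult_scaleR)
  also have "\<dots> = ((0.01::real)^Suc t) *\<^sub>R vector [cos (\<theta> + ssum a \<sigma> (Suc t)), sin (\<theta> + ssum a \<sigma> (Suc t))]"
    by (simp add: rot_vec ssum_def algebra_simps)
  finally show ?case .
qed

lemma cost: "(\<lambda>x::real^2. (x $ 1)\<^sup>2 + 2 * (x $ 2)\<^sup>2) (c *\<^sub>R vector [cos p, sin p]) = c\<^sup>2 * (1 + (sin p)\<^sup>2)"
proof -
  have "c\<^sup>2 * (cos p)\<^sup>2 + c\<^sup>2 * (sin p)\<^sup>2 = c\<^sup>2" by (simp flip: distrib_left)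
  then show ?thesis by (simp add: power_mult_distrib algebra_simps)
qed

lemma G_summable: "summable (\<lambda>t. rr^t * (1 + (sin (\<theta> + ssum a \<sigma> t))\<^sup>2))"
proof (rule summable_comparison_test[where g = "\<lambda>t. 2 * rr^t"])
  show "summable (\<lambda>t. 2 * rr^t)" by (intro summable_mult summable_geometric) (simp add: rr_def)
  show "\<exists>N. \<forall>n\<ge>N. norm (rr^n * (1 + (sin (\<theta> + ssum a \<sigma> n))\<^sup>2)) \<le> 2 * rr^n"
  proof (intro exI allI impI)
    fix n
    have "(sin (\<theta> + ssum a \<sigma> n))\<^sup>2 \<le> 1" by (simp add: abs_square_le_1)
    moreover have "0 \<le> rr^n" by (simp add: rr_def)
    ultimately have "rr^n * (1 + (sin (\<theta> + ssum a \<sigma> n))\<^sup>2) \<le> rr^n * 2"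
      by (intro mult_left_mono) auto
    then show "norm (rr^n * (1 + (sin (\<theta> + ssum a \<sigma> n))\<^sup>2)) \<le> 2 * rr^n"
      by (simp add: rr_def)
  qed
qed

lemma opt_eq: "opt_value (\<lambda>i. if i = 1 then 0.01 *\<^sub>R rot a else 0.01 *\<^sub>R rot (a - pi / 2))
                 (\<lambda>x. (x $ 1)\<^sup>2 + 2 * (x $ 2)\<^sup>2) (vector [cos \<theta>, sin \<theta>]) = Jf a \<theta>"
proof -
  have "\<And>\<sigma> t. (\<lambda>x::real^2. (x $ 1)\<^sup>2 + 2 * (x $ 2)\<^sup>2) (sw_traj (\<lambda>i. if i = 1 then 0.01 *\<^sub>R rot a else 0.01 *\<^sub>R rot (a - pi / 2)) (vector [cos \<theta>, sin \<theta>]) \<sigma> t)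
     = rr^t * (1 + (sin (\<theta> + ssum a \<sigma> t))\<^sup>2)"
  proof -
    fix \<sigma> t
    have p: "((0.01::real)^t)\<^sup>2 = rr^t" unfolding rr_def
      by (simp add: power2_eq_square flip: power_mult_distrib)
    show "(\<lambda>x::real^2. (x $ 1)\<^sup>2 + 2 * (x $ 2)\<^sup>2) (sw_traj (\<lambda>i. if i = 1 then 0.01 *\<^sub>R rot a else 0.01 *\<^sub>R rot (a - pi / 2)) (vector [cos \<theta>, sin \<theta>]) \<sigma> t)
     = rr^t * (1 + (sin (\<theta> + ssum a \<sigma> t))\<^sup>2)" unfolding traj cost p ..
  qed
  then show ?thesis unfolding opt_value_def Jf_def G_def by simp
qed

lemma ssum_Suc: "ssum a \<sigma> (Suc t) = ang a (\<sigma> 0) + ssum a (\<sigma> \<circ> Suc) t"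
  unfolding ssum_def by (subst sum.lessThan_Suc_shift) simp

lemma G_shift: "G a \<sigma> \<theta> = 1 + (sin \<theta>)\<^sup>2 + rr * G a (\<sigma> \<circ> Suc) (\<theta> + ang a (\<sigma> 0))"
proof -
  have "(\<Sum>n. rr^(Suc n) * (1 + (sin (\<theta> + ssum a \<sigma> (Suc n)))\<^sup>2)) = G a \<sigma> \<theta> - (1 + (sin \<theta>)\<^sup>2)"
    unfolding G_def using suminf_split_head[OF G_summable[of \<theta> a \<sigma>]] by (simp add: ssum_def)
  moreover have "(\<Sum>n. rr^(Suc n) * (1 + (sin (\<theta> + ssum a \<sigma> (Suc n)))\<^sup>2))
     = (\<Sum>n. rr * (rr^n * (1 + (sin (\<theta> + ang a (\<sigma> 0) + ssum a (\<sigma> \<circ> Suc) n))\<^sup>2)))"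
    by (simp add: ssum_Suc add.assoc mult.assoc)
  moreover have "\<dots> = rr * G a (\<sigma> \<circ> Suc) (\<theta> + ang a (\<sigma> 0))"
    unfolding G_def by (rule suminf_mult[OF G_summable])
  ultimately show ?thesis by linarith
qed

lemma G_nonneg: "0 \<le> G a \<sigma> \<theta>"
  unfolding G_def by (rule suminf_nonneg[OF G_summable]) (simp add: rr_def)

lemma sin_sq_diff: "(sin (x::real))\<^sup>2 - (sin y)\<^sup>2 = sin (x + y) * sin (x - y)"
proof -
  have "sin (x + y) * sin (x - y) = (sin x)\<^sup>2 * (cos y)\<^sup>2 - (cos x)\<^sup>2 * (sin y)\<^sup>2"
    unfolding sin_add sin_diff by (simp add: power2_eq_square algebra_simps)
  also have "\<dots> = (sin x)\<^sup>2 - (sin y)\<^sup>2" by (simp add: cos_squared_eq algebra_simps)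
  finally show ?thesis by simp
qed

lemma sin_sq_lip: "\<bar>(sin ((x::real) + h))\<^sup>2 - (sin x)\<^sup>2\<bar> \<le> \<bar>h\<bar>"
proof -
  have "\<bar>(sin (x + h))\<^sup>2 - (sin x)\<^sup>2\<bar> = \<bar>sin (x + h + x)\<bar> * \<bar>sin h\<bar>"
  proof -
    have "(sin (x + h))\<^sup>2 - (sin x)\<^sup>2 = sin (x + h + x) * sin h" by (simp add: sin_sq_diff)
    then show ?thesis by (simp only: abs_mult)
  qed
  also have "\<dots> \<le> 1 * \<bar>h\<bar>"
    by (intro mult_mono abs_sin_x_le_abs_x) auto
  finally show ?thesis by simp
qed

lemma G_lip: "\<bar>G a \<sigma> (x + h) - G a \<sigma> x\<bar> \<le> 2 * \<bar>h\<bar>"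
proof -
  let ?d = "\<lambda>t. rr^t * ((sin (x + ssum a \<sigma> t + h))\<^sup>2 - (sin (x + ssum a \<sigma> t))\<^sup>2)"
  have eq: "G a \<sigma> (x + h) - G a \<sigma> x = suminf ?d"
    unfolding G_def by (subst suminf_diff[OF G_summable G_summable]) (simp add: algebra_simps)
  have sg: "summable (\<lambda>t. rr^t * \<bar>h\<bar>)" by (intro summable_mult2 summable_geometric) (simp add: rr_def)
  have sd: "summable ?d" using summable_diff[OF G_summable G_summable, of "x + h" a \<sigma> x a \<sigma>]
    by (simp add: algebra_simps)
  have b: "\<bar>?d t\<bar> \<le> rr^t * \<bar>h\<bar>" for t
    using sin_sq_lip[of "x + ssum a \<sigma> t" h] by (simp add: abs_mult rr_def mult_left_mono)
  have "suminf ?d \<le> (\<Sum>t. rr^t * \<bar>h\<bar>)" by (rule suminf_le[OF _ sd sg]) (use b in \<open>auto simp: abs_le_iff\<close>)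
  moreover have "- (\<Sum>t. rr^t * \<bar>h\<bar>) \<le> suminf ?d"
  proof -
    have "(\<Sum>t. - (rr^t * \<bar>h\<bar>)) \<le> suminf ?d"
      by (rule suminf_le[OF _ summable_minus[OF sg] sd]) (use b in \<open>simp add: abs_le_iff minus_le_iff\<close>)
    then show ?thesis using suminf_minus[OF sg] by simp
  qed
  moreover have "(\<Sum>t. rr^t * \<bar>h\<bar>) = (\<Sum>t. rr^t) * \<bar>h\<bar>"
    by (rule suminf_mult2[symmetric], rule summable_geometric) (simp add: rr_def)
  moreover have "(\<Sum>t. rr^t) = 1 / (1 - rr)" by (rule suminf_geometric) (simp add: rr_def)
  then have "(\<Sum>t. rr^t) * \<bar>h\<bar> \<le> 2 * \<bar>h\<bar>" by (intro mult_right_mono) (auto simp: rr_def)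
  ultimately show ?thesis unfolding eq abs_le_iff by linarith
qed

lemma G_step: "G a \<sigma> (y + h) - G a \<sigma> y \<le> (sin (y + h))\<^sup>2 - (sin y)\<^sup>2 + 2 * rr * \<bar>h\<bar>"
proof -
  have "G a (\<sigma> \<circ> Suc) (y + ang a (\<sigma> 0) + h) - G a (\<sigma> \<circ> Suc) (y + ang a (\<sigma> 0)) \<le> 2 * \<bar>h\<bar>"
    using G_lip by (metis abs_le_D1)
  then have "rr * (G a (\<sigma> \<circ> Suc) (y + ang a (\<sigma> 0) + h) - G a (\<sigma> \<circ> Suc) (y + ang a (\<sigma> 0))) \<le> rr * (2 * \<bar>h\<bar>)"
    by (intro mult_left_mono) (auto simp: rr_def)
  then show ?thesis
    using G_shift[of a \<sigma> "y + h"] G_shift[of a \<sigma> y] by (simp add: algebra_simps)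
qed

lemma G_step2: "G a \<sigma> (y + h) - G a \<sigma> y \<le> (sin (y + h))\<^sup>2 - (sin y)\<^sup>2
   + rr * ((sin (y + ang a (\<sigma> 0) + h))\<^sup>2 - (sin (y + ang a (\<sigma> 0)))\<^sup>2) + 2 * rr * rr * \<bar>h\<bar>"
proof -
  have "G a (\<sigma> \<circ> Suc) (y + ang a (\<sigma> 0) + h) - G a (\<sigma> \<circ> Suc) (y + ang a (\<sigma> 0)) \<le>
     (sin (y + ang a (\<sigma> 0) + h))\<^sup>2 - (sin (y + ang a (\<sigma> 0)))\<^sup>2 + 2 * rr * \<bar>h\<bar>"
    by (rule G_step)
  then have "rr * (G a (\<sigma> \<circ> Suc) (y + ang a (\<sigma> 0) + h) - G a (\<sigma> \<circ> Suc) (y + ang a (\<sigma> 0))) \<le>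
     rr * ((sin (y + ang a (\<sigma> 0) + h))\<^sup>2 - (sin (y + ang a (\<sigma> 0)))\<^sup>2 + 2 * rr * \<bar>h\<bar>)"
    by (intro mult_left_mono) (auto simp: rr_def)
  then show ?thesis
    using G_shift[of a \<sigma> "y + h"] G_shift[of a \<sigma> y] by (simp add: algebra_simps)
qed

lemma SS_nonempty: "(\<lambda>_. 1) \<in> switching_signals"
  by (simp add: switching_signals_def)

lemma G_bdd: "bdd_below ((\<lambda>\<sigma>. G a \<sigma> \<theta>) ` S)"
  by (rule bdd_belowI2[of _ 0]) (simp add: G_nonneg)

lemma J_le: "\<sigma> \<in> switching_signals \<Longrightarrow> Jf a \<theta> \<le> G a \<sigma> \<theta>"
  unfolding Jf_def by (rule cINF_lower[OF G_bdd])

lemma near_opt: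
  assumes X: "Jf a (\<nu> + a) = Jf a (\<nu> + (a - pi / 2))" and i: "i \<in> {1, 2}" and e: "0 < \<epsilon>"
  shows "\<exists>\<sigma>\<in>switching_signals. \<sigma> 0 = i \<and> G a \<sigma> \<nu> \<le> Jf a \<nu> + \<epsilon>"
proof -
  define X where "X = Jf a (\<nu> + a)"
  have JX: "Jf a (\<nu> + ang a j) = X" for j using X by (simp add: ang_def X_def)
  have low: "1 + (sin \<nu>)\<^sup>2 + rr * X \<le> Jf a \<nu>"
    unfolding Jf_def
  proof (rule cINF_greatest)
    show "switching_signals \<noteq> {}" using SS_nonempty by blast
    fix \<sigma> assume s: "\<sigma> \<in> switching_signals"
    then have "\<sigma> \<circ> Suc \<in> switching_signals" by (simp add: switching_signals_def)
    then have "X \<le> G a (\<sigma> \<circ> Suc) (\<nu> + ang a (\<sigma> 0))" using J_le JX by metis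
    then have "rr * X \<le> rr * G a (\<sigma> \<circ> Suc) (\<nu> + ang a (\<sigma> 0))" by (simp add: rr_def)
    then show "1 + (sin \<nu>)\<^sup>2 + rr * X \<le> G a \<sigma> \<nu>" using G_shift[of a \<sigma> \<nu>] by linarith
  qed
  have "Jf a (\<nu> + ang a i) < X + \<epsilon> / rr" using JX e by (simp add: rr_def)
  then obtain \<tau> where \<tau>: "\<tau> \<in> switching_signals" "G a \<tau> (\<nu> + ang a i) < X + \<epsilon> / rr"
    unfolding Jf_def using cINF_less_iff[OF _ G_bdd] SS_nonempty by blast
  define \<sigma> where "\<sigma> = case_nat i \<tau>"
  have \<sigma>s: "\<sigma> \<in> switching_signals" using \<tau>(1) i
    by (auto simp: \<sigma>_def switching_signals_def split: nat.split)
  have "\<sigma> \<circ> Suc = \<tau>" by (auto simp: \<sigma>_def)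
  then have Gs: "G a \<sigma> \<nu> = 1 + (sin \<nu>)\<^sup>2 + rr * G a \<tau> (\<nu> + ang a i)"
    using G_shift[of a \<sigma> \<nu>] by (simp add: \<sigma>_def)
  have "rr * G a \<tau> (\<nu> + ang a i) < rr * (X + \<epsilon> / rr)"
    by (rule mult_strict_left_mono[OF \<tau>(2)]) (simp add: rr_def)
  also have "rr * (X + \<epsilon> / rr) = rr * X + \<epsilon>" by (simp add: rr_def field_simps)
  finally have "G a \<sigma> \<nu> \<le> Jf a \<nu> + \<epsilon>" using Gs low by linarith
  then show ?thesis using \<sigma>s by (intro bexI[of _ \<sigma>]) (auto simp: \<sigma>_def)
qed

lemma trigQ:
  fixes \<nu> \<alpha> k :: real
  assumes w: "\<bar>\<nu> + \<alpha> - pi / 4\<bar> < 0.01" and k: "0 < k" "k \<le> rr / 4" and sk: "k < sin (2 * k)"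
  shows "((sin (\<nu> + k))\<^sup>2 - (sin \<nu>)\<^sup>2) + ((sin (\<nu> - k))\<^sup>2 - (sin \<nu>)\<^sup>2)
     + rr * (((sin (\<nu> + (\<alpha> - pi / 2) + k))\<^sup>2 - (sin (\<nu> + (\<alpha> - pi / 2)))\<^sup>2)
           + ((sin (\<nu> + \<alpha> - k))\<^sup>2 - (sin (\<nu> + \<alpha>))\<^sup>2))
     + 4 * rr * rr * k \<le> - (rr * k / 4)"
proof -
  define u where "u = \<nu> + \<alpha>"
  have T1: "((sin (\<nu> + k))\<^sup>2 - (sin \<nu>)\<^sup>2) + ((sin (\<nu> - k))\<^sup>2 - (sin \<nu>)\<^sup>2) = 2 * cos (2 * \<nu>) * (sin k)\<^sup>2"
  proof -
    have "(sin (\<nu> + k))\<^sup>2 - (sin \<nu>)\<^sup>2 = sin (2 * \<nu> + k) * sin k" by (simp add: sin_sq_diff)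
    moreover have "(sin (\<nu> - k))\<^sup>2 - (sin \<nu>)\<^sup>2 = - (sin (2 * \<nu> - k) * sin k)" by (simp add: sin_sq_diff)
    moreover have "sin (2 * \<nu> + k) - sin (2 * \<nu> - k) = 2 * cos (2 * \<nu>) * sin k" by (simp add: sin_add sin_diff)
    ultimately show ?thesis by (simp add: power2_eq_square algebra_simps)
  qed
  have "(sin k)\<^sup>2 \<le> k\<^sup>2" using abs_sin_x_le_abs_x[of k] abs_le_square_iff by blast
  moreover have "cos (2 * \<nu>) * (sin k)\<^sup>2 \<le> 1 * (sin k)\<^sup>2" by (intro mult_right_mono) auto
  ultimately have T1b: "2 * cos (2 * \<nu>) * (sin k)\<^sup>2 \<le> 2 * k\<^sup>2" by linarith
  have c: "(sin (y - pi / 2))\<^sup>2 = 1 - (sin y)\<^sup>2" for y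
    by (simp add: sin_diff cos_squared_eq)
  have T2: "((sin (\<nu> + (\<alpha> - pi / 2) + k))\<^sup>2 - (sin (\<nu> + (\<alpha> - pi / 2)))\<^sup>2)
           + ((sin (\<nu> + \<alpha> - k))\<^sup>2 - (sin (\<nu> + \<alpha>))\<^sup>2) = - (sin (2 * k) * sin (2 * u))"
  proof -
    have e1: "\<nu> + (\<alpha> - pi / 2) + k = (u + k) - pi / 2" by (simp add: u_def)
    have e2: "\<nu> + (\<alpha> - pi / 2) = u - pi / 2" by (simp add: u_def)
    have e3: "\<nu> + \<alpha> - k = u - k" by (simp add: u_def)
    have e4: "\<nu> + \<alpha> = u" by (simp add: u_def)
    have c1: "(sin (\<nu> + (\<alpha> - pi / 2) + k))\<^sup>2 = 1 - (sin (u + k))\<^sup>2" by (simp only: e1 c)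
    have c2: "(sin (\<nu> + (\<alpha> - pi / 2)))\<^sup>2 = 1 - (sin u)\<^sup>2" by (simp only: e2 c)
    have "(sin (u + k))\<^sup>2 - (sin u)\<^sup>2 = sin (2 * u + k) * sin k" by (simp add: sin_sq_diff)
    moreover have "(sin (u - k))\<^sup>2 - (sin u)\<^sup>2 = - (sin (2 * u - k) * sin k)" by (simp add: sin_sq_diff)
    moreover have "sin (2 * u + k) * sin k + sin (2 * u - k) * sin k = sin (2 * k) * sin (2 * u)"
      unfolding sin_double[of k] by (simp add: sin_add sin_diff algebra_simps)
    ultimately show ?thesis unfolding c1 c2 e3 e4 by linarith
  qed
  have s2u: "9 / 10 \<le> sin (2 * u)"
  proof -
    define w where "w = u - pi / 4"
    have "2 * u = 2 * w + pi / 2" by (simp add: w_def)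
    then have "sin (2 * u) = cos (2 * w)" by (simp add: sin_add)
    also have "\<dots> = 1 - 2 * (sin w)\<^sup>2" by (rule cos_double_sin)
    finally have "sin (2 * u) = 1 - 2 * (sin w)\<^sup>2" .
    moreover have "(sin w)\<^sup>2 \<le> w\<^sup>2" using abs_sin_x_le_abs_x[of w] abs_le_square_iff by blast
    moreover have "\<bar>w\<bar> \<le> 1 / 100" using w by (simp add: w_def u_def)
    then have "w\<^sup>2 \<le> (1/100)\<^sup>2" using abs_le_square_iff[of w "1/100"] by simp
    ultimately show ?thesis by (simp add: power2_eq_square)
  qed
  have "k * (9 / 10) \<le> sin (2 * k) * sin (2 * u)"
    by (rule mult_mono) (use sk s2u k in auto)
  then have f1: "rr * (k * (9 / 10)) \<le> rr * (sin (2 * k) * sin (2 * u))"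
    by (intro mult_left_mono) (auto simp: rr_def)
  have f2: "k * k \<le> k * (rr / 4)" using k by (intro mult_left_mono) auto
  have f3: "rr * (k * (9 / 10)) = 9 * k / 100000" "k * (rr / 4) = k / 40000" "4 * rr * rr * k = k / 25000000"
    "- (rr * k / 4) = - (k / 40000)"
    by (simp_all add: rr_def)
  have f4: "k\<^sup>2 = k * k" by (simp add: power2_eq_square)
  from T2 have f5: "rr * (((sin (\<nu> + (\<alpha> - pi / 2) + k))\<^sup>2 - (sin (\<nu> + (\<alpha> - pi / 2)))\<^sup>2)
           + ((sin (\<nu> + \<alpha> - k))\<^sup>2 - (sin (\<nu> + \<alpha>))\<^sup>2)) = - (rr * (sin (2 * k) * sin (2 * u)))"
    by simp
  show ?thesis unfolding f5 f3(4) using T1 T1b f1 f2 f3 f4 k by argo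
qed

theorem lemma8:
  fixes \<alpha> \<nu> :: real
  assumes "pi / 8 < \<alpha>" and "\<alpha> < 3 * pi / 8"
    and "\<alpha> / pi \<notin> \<rat>"
    and "\<nu> \<in> {(pi / 4 - \<alpha>) - 0.01 <..< (pi / 4 - \<alpha>) + 0.01}"
    and "(\<lambda>\<theta>. opt_value (\<lambda>i. if i = 1 then 0.01 *\<^sub>R rot \<alpha> else 0.01 *\<^sub>R rot (\<alpha> - pi / 2))
                 (\<lambda>x. (x $ 1)\<^sup>2 + 2 * (x $ 2)\<^sup>2) (vector [cos \<theta>, sin \<theta>])) (\<nu> + \<alpha>)
         - (\<lambda>\<theta>. opt_value (\<lambda>i. if i = 1 then 0.01 *\<^sub>R rot \<alpha> else 0.01 *\<^sub>R rot (\<alpha> - pi / 2))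
                 (\<lambda>x. (x $ 1)\<^sup>2 + 2 * (x $ 2)\<^sup>2) (vector [cos \<theta>, sin \<theta>])) (\<nu> + (\<alpha> - pi / 2)) = 0"
  shows "\<not> (\<lambda>\<theta>. opt_value (\<lambda>i. if i = 1 then 0.01 *\<^sub>R rot \<alpha> else 0.01 *\<^sub>R rot (\<alpha> - pi / 2))
                 (\<lambda>x. (x $ 1)\<^sup>2 + 2 * (x $ 2)\<^sup>2) (vector [cos \<theta>, sin \<theta>])) differentiable (at \<nu>)"
proof -
  have fe: "(\<lambda>\<theta>. opt_value (\<lambda>i. if i = 1 then 0.01 *\<^sub>R rot \<alpha> else 0.01 *\<^sub>R rot (\<alpha> - pi / 2))
                 (\<lambda>x. (x $ 1)\<^sup>2 + 2 * (x $ 2)\<^sup>2) (vector [cos \<theta>, sin \<theta>])) = Jf \<alpha>"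
    by (rule ext) (rule opt_eq)
  have X: "Jf \<alpha> (\<nu> + \<alpha>) = Jf \<alpha> (\<nu> + (\<alpha> - pi / 2))" using assms(5) unfolding opt_eq by simp
  have w: "\<bar>\<nu> + \<alpha> - pi / 4\<bar> < 0.01" using assms(4) unfolding abs_less_iff by auto
  let ?J = "Jf \<alpha>"
  show ?thesis unfolding fe
  proof
    assume "Jf \<alpha> differentiable at \<nu>"
    then obtain D where "DERIV (Jf \<alpha>) \<nu> :> D" using real_differentiable_def by blast
    from LIM_D[OF DERIV_D[OF this], of "rr / 8"] obtain s where s: "s > 0"
      "\<And>h. h \<noteq> 0 \<Longrightarrow> norm (h - 0) < s \<Longrightarrow> norm ((?J (\<nu> + h) - ?J \<nu>) / h - D) < rr / 8"
      by (auto simp: rr_def)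
    from LIM_D[OF DERIV_D[OF DERIV_sin[of "0::real"]], of "1 / 2"] obtain s2 where s2: "s2 > 0"
      "\<forall>h::real. h \<noteq> 0 \<and> norm (h - 0) < s2 \<longrightarrow> norm ((sin (0 + h) - sin 0) / h - cos 0) < 1 / 2"
      by (meson half_gt_zero zero_less_one)
    define k where "k = min (s / 2) (min (s2 / 4) (rr / 4))"
    have k: "0 < k" "k < s" "2 * k < s2" "k \<le> rr / 4" using s(1) s2(1) by (auto simp: k_def rr_def)
    have A1: "\<bar>(?J (\<nu> + k) - ?J \<nu>) / k - D\<bar> < rr / 8" using s(2)[of k] k by simp
    have A2: "\<bar>(?J (\<nu> + - k) - ?J \<nu>) / (- k) - D\<bar> < rr / 8" using s(2)[of "- k"] k by simp
    have "\<bar>sin (2 * k) / (2 * k) - 1\<bar> < 1 / 2" using s2(2)[rule_format, of "2 * k"] k by simp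
    then have "1 / 2 < sin (2 * k) / (2 * k)" by linarith
    then have sk: "k < sin (2 * k)" using k(1) by (simp add: field_simps)
    have low: "- (rr * k / 4) < ?J (\<nu> + k) + ?J (\<nu> - k) - 2 * ?J \<nu>"
    proof -
      define P where "P = ?J (\<nu> + k) - ?J \<nu>"
      define M where "M = ?J (\<nu> - k) - ?J \<nu>"
      have "D - rr / 8 < P / k" using A1 unfolding P_def by linarith
      moreover have "(?J (\<nu> + - k) - ?J \<nu>) / (- k) = - (M / k)" unfolding M_def by simp
      then have "- (M / k) < D + rr / 8" using A2 by linarith
      ultimately have "- (rr / 4) < P / k + M / k" by linarith
      then have "- (rr / 4) * k < (P / k + M / k) * k" using k(1) by (intro mult_strict_right_mono) auto
      also have "(P / k + M / k) * k = P + M" using k(1) by (simp add: field_simps)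
      finally show ?thesis unfolding P_def M_def by (simp add: algebra_simps)
    qed
    have up: "?J (\<nu> + k) + ?J (\<nu> - k) - 2 * ?J \<nu> \<le>
      ((sin (\<nu> + k))\<^sup>2 - (sin \<nu>)\<^sup>2) + ((sin (\<nu> - k))\<^sup>2 - (sin \<nu>)\<^sup>2)
     + rr * (((sin (\<nu> + (\<alpha> - pi / 2) + k))\<^sup>2 - (sin (\<nu> + (\<alpha> - pi / 2)))\<^sup>2)
           + ((sin (\<nu> + \<alpha> - k))\<^sup>2 - (sin (\<nu> + \<alpha>))\<^sup>2))
     + 4 * rr * rr * k"
    proof (rule field_le_epsilon)
      fix e :: real assume e: "0 < e"
      obtain \<sigma>2 where \<sigma>2: "\<sigma>2 \<in> switching_signals" "\<sigma>2 0 = 2" "G \<alpha> \<sigma>2 \<nu> \<le> ?J \<nu> + e / 2"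
        using near_opt[OF X, of 2 "e / 2"] e by auto
      obtain \<sigma>1 where \<sigma>1: "\<sigma>1 \<in> switching_signals" "\<sigma>1 0 = 1" "G \<alpha> \<sigma>1 \<nu> \<le> ?J \<nu> + e / 2"
        using near_opt[OF X, of 1 "e / 2"] e by auto
      have g2: "G \<alpha> \<sigma>2 (\<nu> + k) - G \<alpha> \<sigma>2 \<nu> \<le> (sin (\<nu> + k))\<^sup>2 - (sin \<nu>)\<^sup>2
         + rr * ((sin (\<nu> + (\<alpha> - pi / 2) + k))\<^sup>2 - (sin (\<nu> + (\<alpha> - pi / 2)))\<^sup>2) + 2 * rr * rr * k"
        using G_step2[of \<alpha> \<sigma>2 \<nu> k] \<sigma>2(2) k(1) by (simp add: ang_def)
      have g1: "G \<alpha> \<sigma>1 (\<nu> - k) - G \<alpha> \<sigma>1 \<nu> \<le> (sin (\<nu> - k))\<^sup>2 - (sin \<nu>)\<^sup>2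
         + rr * ((sin (\<nu> + \<alpha> - k))\<^sup>2 - (sin (\<nu> + \<alpha>))\<^sup>2) + 2 * rr * rr * k"
        using G_step2[of \<alpha> \<sigma>1 \<nu> "- k"] \<sigma>1(2) k(1) by (simp add: ang_def)
      have "?J (\<nu> + k) \<le> G \<alpha> \<sigma>2 (\<nu> + k)" by (rule J_le[OF \<sigma>2(1)])
      moreover have "?J (\<nu> - k) \<le> G \<alpha> \<sigma>1 (\<nu> - k)" by (rule J_le[OF \<sigma>1(1)])
      ultimately show "?J (\<nu> + k) + ?J (\<nu> - k) - 2 * ?J \<nu> \<le>
      ((sin (\<nu> + k))\<^sup>2 - (sin \<nu>)\<^sup>2) + ((sin (\<nu> - k))\<^sup>2 - (sin \<nu>)\<^sup>2)
     + rr * (((sin (\<nu> + (\<alpha> - pi / 2) + k))\<^sup>2 - (sin (\<nu> + (\<alpha> - pi / 2)))\<^sup>2)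
           + ((sin (\<nu> + \<alpha> - k))\<^sup>2 - (sin (\<nu> + \<alpha>))\<^sup>2))
     + 4 * rr * rr * k + e"
        using g1 g2 \<sigma>1(3) \<sigma>2(3) by (simp add: algebra_simps)
    qed
    have "... \<le> - (rr * k / 4)" by (rule trigQ[OF w k(1) k(4) sk])
    with low up show False by linarith
  qed
qed

end
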